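(* The function $\rho^*(p)$ is strictly decreasing in $p$ on $(0,1]$.
   Context: Let $f(z)=\sqrt{2/\pi}\,e^{-z^2/2}$ for $z\ge 0$. For $p\in(0,1]$, $z^*(p)>0$ is the number satisfying $\int_0^{z^*}x^pf(x)\,dx=\int_{z^*}^\infty x^pf(x)\,dx$, and $\rho^*(p)=1-\operatorname{erf}(z^*(p)/\sqrt2)$. *)

theory Defs
  imports "HOL-Analysis.Analysis"
begin

definition hn_dens :: "real \<Rightarrow> real" where
  "hn_dens z = sqrt (2 / pi) * exp (- (z\<^sup>2) / 2)"

definition erf :: "real \<Rightarrow> real" where
  "erf x = 2 / sqrt pi * integral {0..x} (\<lambda>t. exp (- (t\<^sup>2)))"

definition zstar :: "real \<Rightarrow> real" where
  "zstar p = (THE z. z > 0 \<and>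
      integral {0..z} (\<lambda>x. x powr p * hn_dens x) = integral {z..} (\<lambda>x. x powr p * hn_dens x))"

definition rhostar :: "real \<Rightarrow> real" where
  "rhostar p = 1 - erf (zstar p / sqrt 2)"

end

theory Submission
  imports Defs
begin

definition gg :: "real \<Rightarrow> real \<Rightarrow> real" where
  "gg p x = x powr p * hn_dens x"

lemma hn_pos: "hn_dens x > 0"
  unfolding hn_dens_def by simp

lemma hn_anti: "0 \<le> x \<Longrightarrow> x \<le> y \<Longrightarrow> hn_dens y \<le> hn_dens x"
  unfolding hn_dens_def by (simp add: power_mono)

lemma gg_cont:
  assumes p: "p > 0" and that: "a \<ge> 0"
  shows "continuous_on {a..} (gg p)"
proof -
  have "continuous_on {a..} (\<lambda>x. x powr p)"
    by (rule continuous_on_powr') (use p that in \<open>auto intro!: continuous_intros\<close>)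
  then show ?thesis unfolding gg_def hn_dens_def
    by (auto intro!: continuous_intros)
qed

lemma gg_nonneg: "0 \<le> gg p x"
  unfolding gg_def using hn_pos[of x] by (simp add: less_imp_le)

lemma gg_bound:
  assumes "0 \<le> x" "0 < p" "p \<le> 1"
  shows "gg p x \<le> sqrt (2/pi) * exp 2 * exp (- 1 * x)"
proof -
  have a: "x powr p \<le> exp x"
  proof (cases "x \<le> 1")
    case True
    then have "x powr p \<le> 1" using assms by (intro powr_le1) auto
    also have "1 \<le> exp x" using assms by simp
    finally show ?thesis .
  next
    case False
    then have "x powr p \<le> x powr 1" using assms by (intro powr_mono) auto
    also have "\<dots> \<le> exp x" using assms by (simp add: order_trans[OF _ exp_ge_add_one_self])
    finally show ?thesis .
  qed
  have b: "exp (- (x\<^sup>2) / 2) \<le> exp (2 - 2*x)"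
  proof -
    have "(x-2)^2 \<ge> 0" by simp
    then have "- (x\<^sup>2) / 2 \<le> 2 - 2*x" by (simp add: power2_eq_square algebra_simps)
    then show ?thesis by simp
  qed
  have "gg p x = sqrt (2/pi) * (x powr p * exp (- (x\<^sup>2) / 2))"
    unfolding gg_def hn_dens_def by simp
  also have "\<dots> \<le> sqrt (2/pi) * (exp x * exp (2 - 2*x))"
    by (intro mult_left_mono mult_mono a b) auto
  also have "exp x * exp (2 - 2*x) = exp 2 * exp (- 1 * x)"
    by (simp add: exp_add[symmetric])
  finally show ?thesis by (simp add: mult.assoc)
qed

lemma gg_integrable:
  assumes "0 \<le> a" "0 < p" "p \<le> 1"
  shows "gg p integrable_on {a..}"
proof (rule measurable_bounded_by_integrable_imp_integrable_real)
  show "gg p \<in> borel_measurable (lebesgue_on {a..})"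
    by (rule continuous_imp_measurable_on_sets_lebesgue) (use gg_cont assms in auto)
  show "(\<lambda>x. sqrt (2/pi) * exp 2 * exp (- 1 * x)) integrable_on {a..}"
    using integrable_on_cmult_left[OF integrable_on_exp_minus_to_infinity[of 1 a], of "sqrt (2/pi) * exp 2"] by simp
  show "\<bar>gg p x\<bar> \<le> sqrt (2/pi) * exp 2 * exp (- 1 * x)" if "x \<in> {a..}" for x
    using gg_bound[of x p] gg_nonneg[of p x] assms that by auto
qed auto


lemma gg_int_Icc:
  assumes "0 \<le> a" "0 < p"
  shows "gg p integrable_on {a..b}"
  by (rule integrable_continuous_interval, rule continuous_on_subset[OF gg_cont[of p a]]) (use assms in auto)

lemma gg_split:
  assumes "0 \<le> z" "0 < p" "p \<le> 1"
  shows "integral {0..} (gg p) = integral {0..z} (gg p) + integral {z..} (gg p)"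
proof -
  have "{0..} = {0..z} \<union> {z..}" using assms by auto
  moreover have "{0..z} \<inter> {z..} = {z}" using assms by auto
  ultimately show ?thesis
    using integral_Un[of "gg p" "{0..z}" "{z..}"] gg_int_Icc[of 0 p z] gg_integrable[of z p] assms
    by simp
qed

lemma gg_lower:
  assumes "0 \<le> a" "a < b" "0 < p" "p \<le> 1"
  shows "integral {a..b} (gg p) \<ge> (b - a) / 2 * (((a+b)/2) powr p * hn_dens b)"
proof -
  define m where "m = (a+b)/2"
  have m: "a \<le> m" "m \<le> b" using assms unfolding m_def by auto
  have "integral {a..b} (gg p) = integral {a..m} (gg p) + integral {m..b} (gg p)"
    using Henstock_Kurzweil_Integration.integral_combine[OF m gg_int_Icc[of a p b]] assms by simp
  moreover have "integral {a..m} (gg p) \<ge> 0"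
    by (rule integral_nonneg) (use gg_int_Icc[of a p m] assms gg_nonneg in auto)
  moreover have "integral {m..b} (gg p) \<ge> integral {m..b} (\<lambda>_. m powr p * hn_dens b)"
  proof (rule integral_le)
    show "gg p integrable_on {m..b}" using gg_int_Icc[of m p b] m assms by auto
    show "(\<lambda>_. m powr p * hn_dens b) integrable_on {m..b}" by (rule integrable_const_ivl)
    fix x assume x: "x \<in> {m..b}"
    have "m powr p \<le> x powr p" using x m assms by (intro powr_mono2) auto
    moreover have "hn_dens b \<le> hn_dens x" using x m assms by (intro hn_anti) auto
    ultimately show "m powr p * hn_dens b \<le> gg p x"
      unfolding gg_def using hn_pos[of b] by (intro mult_mono) auto
  qed
  moreover have "integral {m..b} (\<lambda>_. m powr p * hn_dens b) = (b - a) / 2 * (m powr p * hn_dens b)"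
    using m unfolding m_def by (simp add: field_simps)
  ultimately show ?thesis unfolding m_def by linarith
qed

lemma gg_lower_pos:
  assumes "0 \<le> a" "a < b" "0 < p" "p \<le> 1"
  shows "integral {a..b} (gg p) > 0"
proof -
  have "(b - a) / 2 * (((a+b)/2) powr p * hn_dens b) > 0"
    using assms hn_pos[of b] by (intro mult_pos_pos) auto
  then show ?thesis using gg_lower[OF assms] by linarith
qed

lemma G_strict:
  assumes "0 \<le> a" "a < b" "0 < p" "p \<le> 1"
  shows "integral {0..a} (gg p) < integral {0..b} (gg p)"
  using Henstock_Kurzweil_Integration.integral_combine[of 0 a b "gg p"] gg_int_Icc[of 0 p b] gg_lower_pos[OF assms] assms
  by simp

lemma tail_bound:
  assumes "0 \<le> z" "0 < p" "p \<le> 1"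
  shows "integral {z..} (gg p) \<le> sqrt (2/pi) * exp 2 * exp (- z)"
proof -
  have "integral {z..} (gg p) \<le> integral {z..} (\<lambda>x. sqrt (2/pi) * exp 2 * exp (- 1 * x))"
    by (rule integral_le)
      (use gg_integrable[of z p] assms gg_bound[of _ p]
        integrable_on_cmult_left[OF integrable_on_exp_minus_to_infinity[of 1 z], of "sqrt (2/pi) * exp 2"]
        in auto)
  also have "\<dots> = sqrt (2/pi) * exp 2 * exp (- z)"
    using integral_unique[OF has_integral_exp_minus_to_infinity[of 1 z]] by simp
  finally show ?thesis .
qed

lemma total_lower:
  assumes "0 < p" "p \<le> 1"
  shows "integral {0..} (gg p) \<ge> hn_dens 2 / 2"
proof -
  have "integral {0..} (gg p) = integral {0..2} (gg p) + integral {2..} (gg p)"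
    using gg_split[of 2 p] assms by simp
  moreover have "integral {2..} (gg p) \<ge> 0"
    by (rule integral_nonneg) (use gg_integrable[of 2 p] assms gg_nonneg in auto)
  moreover have "integral {0..2} (gg p) = integral {0..1} (gg p) + integral {1..2} (gg p)"
    using Henstock_Kurzweil_Integration.integral_combine[of 0 1 2 "gg p"] gg_int_Icc[of 0 p 2] assms by simp
  moreover have "integral {0..1} (gg p) \<ge> 0"
    by (rule integral_nonneg) (use gg_int_Icc[of 0 p 1] assms gg_nonneg in auto)
  moreover have "integral {1..2} (gg p) \<ge> (2 - 1) / 2 * (((1+2)/2) powr p * hn_dens 2)"
    using gg_lower[of 1 2 p] assms by simp
  moreover have "((1+2)/2::real) powr p \<ge> 1"
    using assms by (simp add: ge_one_powr_ge_zero)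
  then have "1 * hn_dens 2 \<le> ((1+2)/2::real) powr p * hn_dens 2"
    using hn_pos[of 2] by (intro mult_right_mono) auto
  ultimately show ?thesis by simp
qed

definition PP :: "real \<Rightarrow> real \<Rightarrow> bool" where
  "PP p z \<longleftrightarrow> z > 0 \<and> integral {0..z} (\<lambda>x. x powr p * hn_dens x) = integral {z..} (\<lambda>x. x powr p * hn_dens x)"

lemma PP_iff:
  assumes "0 < p" "p \<le> 1"
  shows "PP p z \<longleftrightarrow> z > 0 \<and> 2 * integral {0..z} (gg p) = integral {0..} (gg p)"
proof -
  have e: "(\<lambda>x. x powr p * hn_dens x) = gg p" by (simp add: gg_def fun_eq_iff)
  show ?thesis unfolding PP_def e using gg_split[of z p] assms by auto
qed

lemma PP_ex1:
  assumes "0 < p" "p \<le> 1"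
  shows "\<exists>!z. PP p z"
proof -
  define C where "C = sqrt (2/pi) * exp 2"
  define h where "h = hn_dens 2"
  define I where "I = integral {0..} (gg p)"
  have C: "C > 0" unfolding C_def by simp
  have h: "h > 0" unfolding h_def by (rule hn_pos)
  have Ih: "I \<ge> h / 2" unfolding I_def h_def using total_lower assms by simp
  define z1 where "z1 = max 1 (ln (8 * C / h))"
  have z1: "z1 \<ge> 1" unfolding z1_def by simp
  have "exp (- z1) \<le> exp (- ln (8 * C / h))" unfolding z1_def by simp
  also have "\<dots> = h / (8 * C)" using C h by (simp add: exp_minus)
  finally have "C * exp (- z1) \<le> C * (h / (8*C))" using C by (intro mult_left_mono) auto
  then have "C * exp (- z1) \<le> h / 8" using C by simp
  then have tl: "integral {z1..} (gg p) \<le> h / 8"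
    using tail_bound[of z1 p] z1 assms unfolding C_def by simp
  have G1: "2 * integral {0..z1} (gg p) \<ge> I"
    using gg_split[of z1 p] assms z1 tl Ih h unfolding I_def by linarith
  have "\<exists>x. 0 \<le> x \<and> x \<le> z1 \<and> integral {0..x} (gg p) = I / 2"
  proof (rule IVT')
    show "integral {0..0} (gg p) \<le> I / 2" using Ih h by simp
    show "I / 2 \<le> integral {0..z1} (gg p)" using G1 by simp
    show "0 \<le> z1" using z1 by simp
    show "continuous_on {0..z1} (\<lambda>x. integral {0..x} (gg p))"
      by (rule indefinite_integral_continuous_1, rule gg_int_Icc) (use assms in auto)
  qed
  then obtain z where z: "0 \<le> z" "integral {0..z} (gg p) = I / 2" by blast
  have "z \<noteq> 0" using z Ih h by auto
  with z have Pz: "PP p z" using PP_iff[OF assms] unfolding I_def by auto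
  have uniq: "w = z" if "PP p w" for w
  proof -
    have w: "w > 0" "2 * integral {0..w} (gg p) = I" using that PP_iff[OF assms] unfolding I_def by auto
    show ?thesis
    proof (rule ccontr)
      assume "w \<noteq> z"
      then consider "w < z" | "z < w" by linarith
      then show False
        using G_strict[of w z p] G_strict[of z w p] w z assms by cases auto
    qed
  qed
  show ?thesis using Pz uniq by blast
qed

lemma zstar_PP:
  assumes "0 < p" "p \<le> 1"
  shows "PP p (zstar p)"
proof -
  have "zstar p = (THE z. PP p z)" unfolding zstar_def PP_def by simp
  then show ?thesis using theI'[OF PP_ex1[OF assms]] by simp
qed

lemma zstar_mono:
  assumes "0 < p" "p < q" "q \<le> 1"
  shows "zstar p < zstar q"
proof (rule ccontr)
  assume "\<not> zstar p < zstar q"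
  then have wz: "zstar q \<le> zstar p" by simp
  define z where "z = zstar p"
  define w where "w = zstar q"
  define d where "d = q - p"
  have d: "d > 0" unfolding d_def using assms by simp
  have p1: "p \<le> 1" "0 < q" using assms by auto
  have Pz: "z > 0" "2 * integral {0..z} (gg p) = integral {0..} (gg p)"
    using zstar_PP[OF assms(1) p1(1)] PP_iff[OF assms(1) p1(1)] unfolding z_def by auto
  have Pw: "w > 0" "2 * integral {0..w} (gg q) = integral {0..} (gg q)"
    using zstar_PP[OF p1(2) assms(3)] PP_iff[OF p1(2) assms(3)] unfolding w_def by auto
  have gq: "gg q x = x powr d * gg p x" for x
    unfolding gg_def d_def by (simp add: powr_add[symmetric])
  have "integral {0..w} (gg q) \<le> integral {0..z} (gg q)"
  proof (cases "w = z")
    case False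
    then show ?thesis using G_strict[of w z q] Pw wz p1 assms unfolding w_def z_def by auto
  qed simp
  then have A: "integral {z..} (gg q) \<le> integral {0..z} (gg q)"
    using gg_split[of z q] Pw Pz p1 assms by linarith
  have B: "integral {0..z} (gg q) \<le> integral {0..z} (\<lambda>x. z powr d * gg p x)"
  proof (rule integral_le)
    show "gg q integrable_on {0..z}" using gg_int_Icc[of 0 q z] p1 by simp
    show "(\<lambda>x. z powr d * gg p x) integrable_on {0..z}"
      using gg_int_Icc[of 0 p z] assms by (intro integrable_on_mult_right) simp
    fix x assume x: "x \<in> {0..z}"
    have "x powr d \<le> z powr d" using x d by (intro powr_mono2) auto
    then show "gg q x \<le> z powr d * gg p x" unfolding gq
      using gg_nonneg[of p x] by (intro mult_right_mono) auto
  qed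
  have C: "integral {0..z} (\<lambda>x. z powr d * gg p x) = integral {z..} (\<lambda>x. z powr d * gg p x)"
    using Pz gg_split[of z p] assms by simp
  define hh where "hh x = gg q x - z powr d * gg p x" for x
  have hint: "hh integrable_on {z..}"
    unfolding hh_def
    using gg_integrable[of z q] gg_integrable[of z p] Pz assms p1
    by (intro integrable_diff integrable_on_mult_right) auto
  have hnn: "\<forall>x\<in>{z..}. 0 \<le> hh x"
  proof
    fix x assume x: "x \<in> {z..}"
    have "z powr d \<le> x powr d" using x d Pz by (intro powr_mono2) auto
    then show "0 \<le> hh x" unfolding hh_def gq
      using gg_nonneg[of p x] by (simp add: mult_right_mono)
  qed
  define c where "c = ((z+1) powr d - z powr d) * ((z+1) powr p * hn_dens (z+2))"
  have cpos: "c > 0" unfolding c_def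
    using d Pz hn_pos[of "z+2"] by (intro mult_pos_pos) (auto intro!: powr_less_mono2)
  have "integral {z+1..z+2} hh \<ge> integral {z+1..z+2} (\<lambda>_. c)"
  proof (rule integral_le)
    show "hh integrable_on {z+1..z+2}" by (rule integrable_on_subinterval[OF hint]) auto
    show "(\<lambda>_. c) integrable_on {z+1..z+2}" by (rule integrable_const_ivl)
    fix x assume x: "x \<in> {z+1..z+2}"
    have a1: "(z+1) powr d \<le> x powr d" using x d Pz by (intro powr_mono2) auto
    have a2: "(z+1) powr p \<le> x powr p" using x assms Pz by (intro powr_mono2) auto
    have a3: "hn_dens (z+2) \<le> hn_dens x" using x Pz by (intro hn_anti) auto
    have zx: "z powr d \<le> (z+1) powr d" using d Pz by (intro powr_mono2) auto
    have m1: "(z+1) powr d - z powr d \<le> x powr d - z powr d" using a1 by simp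
    have m2: "(z+1) powr p * hn_dens (z+2) \<le> x powr p * hn_dens x"
      using a2 a3 hn_pos[of "z+2"] by (intro mult_mono) auto
    have "c \<le> (x powr d - z powr d) * (x powr p * hn_dens x)" unfolding c_def
      by (rule mult_mono[OF m1 m2]) (use zx a1 hn_pos[of "z+2"] in auto)
    moreover have "hh x = (x powr d - z powr d) * (x powr p * hn_dens x)"
      unfolding hh_def gq unfolding gg_def by (simp only: left_diff_distrib)
    ultimately show "c \<le> hh x" by simp
  qed
  then have "integral {z+1..z+2} hh \<ge> c" by simp
  moreover have "integral {z+1..z+2} hh \<le> integral {z..} hh"
  proof (rule integral_subset_le)
    show "{z+1..z+2} \<subseteq> {z..}" by auto
    show "hh integrable_on {z+1..z+2}" by (rule integrable_on_subinterval[OF hint]) auto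
  qed (use hint hnn in auto)
  ultimately have "integral {z..} hh > 0" using cpos by linarith
  moreover have "integral {z..} hh = integral {z..} (gg q) - integral {z..} (\<lambda>x. z powr d * gg p x)"
  proof -
    have i1: "gg q integrable_on {z..}" using gg_integrable[of z q] Pz p1 assms by simp
    have i2: "(\<lambda>x. z powr d * gg p x) integrable_on {z..}"
      using gg_integrable[of z p] Pz assms by (intro integrable_on_mult_right) simp
    show ?thesis unfolding hh_def by (rule integral_diff[OF i1 i2])
  qed
  ultimately show False using A B C by linarith
qed

lemma erf_strict:
  assumes "0 \<le> a" "a < b"
  shows "erf a < erf b"
proof -
  have int: "(\<lambda>t. exp (- (t\<^sup>2))) integrable_on {u..v}" for u v :: real
    by (rule integrable_continuous_interval) (auto intro!: continuous_intros)
  have "integral {0..b} (\<lambda>t. exp (- (t\<^sup>2))) = integral {0..a} (\<lambda>t. exp (- (t\<^sup>2))) + integral {a..b} (\<lambda>t. exp (- (t\<^sup>2)))"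
    using Henstock_Kurzweil_Integration.integral_combine[of 0 a b, OF _ _ int] assms by simp
  moreover have "integral {a..b} (\<lambda>t. exp (- (t\<^sup>2))) \<ge> integral {a..b} (\<lambda>_. exp (- (b\<^sup>2)))"
  proof (rule integral_le)
    fix x assume x: "x \<in> {a..b}"
    then have "x^2 \<le> b^2" using assms by (intro power_mono) auto
    then show "exp (- (b\<^sup>2)) \<le> exp (- (x\<^sup>2))" by simp
  qed (use int in auto)
  moreover have "integral {a..b} (\<lambda>_. exp (- (b\<^sup>2))) > 0" using assms by simp
  ultimately have "integral {0..a} (\<lambda>t. exp (- (t\<^sup>2))) < integral {0..b} (\<lambda>t. exp (- (t\<^sup>2)))"
    by linarith
  then show ?thesis unfolding erf_def by (simp add: divide_strict_right_mono)
qed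

theorem proposition1:
  shows "strict_antimono_on {0<..1} rhostar"
proof (rule monotone_onI)
  fix p q :: real
  assume "p \<in> {0<..1}" "q \<in> {0<..1}" "p < q"
  then have pq: "0 < p" "p < q" "q \<le> 1" by auto
  have z: "zstar p < zstar q" by (rule zstar_mono[OF pq])
  have "zstar p > 0" using zstar_PP[of p] pq unfolding PP_def by auto
  then have "erf (zstar p / sqrt 2) < erf (zstar q / sqrt 2)"
    using z by (intro erf_strict) (auto simp: divide_strict_right_mono)
  then show "rhostar q < rhostar p" unfolding rhostar_def by simp
qed

end
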